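(* Let $a,b$ be positive integers with $\gcd(a,b)=1$ such that $(\mathbb{Z}/(a^2+b^2)\mathbb{Z})^{\times}$ is cyclic, let $n_1$ be a positive integer and let $m$ be a positive integer such that $(a^2+b^2)n_1-m^4=u^2+(a^2+b^2)z^2+(a^2+b^2)w^2$ for some $u\in\mathbb{Z}$, $z,w\in\mathbb{N}$. Assume moreover that $\gcd(m,p)=1$ for every odd prime $p$ dividing $a^2+b^2$, and that if $\gcd(m,a^2+b^2)>1$ then $2\nmid ab$ and $\gcd(m,a^2+b^2)=2$. Then there exist $x,y\in\mathbb{Z}$ with $$x^2+y^2+z^2+w^2=n_1\quad\text{and}\quad ax+by=m^2.$$ If in addition $m^2\ge \sqrt{b^2 n_1}$ and $a\le b$, then $x,y\ge 0$.
   Context: $\mathbb{N}=\{0,1,2,\dots\}$. *)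

theory Defs
  imports "HOL-Number_Theory.Number_Theory"
begin

end

theory Submission imports Defs begin

lemma sqrt1_nat:
  assumes pr: "residue_primroot n g" and n2: "n > 2" and ct: "coprime t n"
    and sq: "[t^2 = 1] (mod n)"
  shows "t mod n = 1 \<or> t mod n = n - 1"
proof -
  have gen: "bij_betw (\<lambda>i. g ^ i mod n) {..<totient n} (totatives n)"
    using residue_primroot_is_generator[OF _ pr] n2 by simp
  have ordg: "ord n g = totient n" using pr by (simp add: residue_primroot_def)
  have key: "2 * i = 0 \<or> 2 * i = totient n" if "i < totient n" "[(g^i)^2 = 1] (mod n)" for i
  proof -
    have "[g^(2*i) = 1] (mod n)" using that(2) by (simp add: power_mult mult.commute)
    then have "totient n dvd 2 * i" using ord_divides ordg by metis
    then obtain k where k: "2 * i = totient n * k" by auto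
    have "totient n * k < totient n * 2" using k that(1) by linarith
    then have "k < 2" by simp
    then have "k = 0 \<or> k = 1" by auto
    then show ?thesis using k by auto
  qed
  have tt: "t mod n \<in> totatives n"
  proof -
    have "t mod n \<noteq> 0"
    proof
      assume "t mod n = 0"
      then have "n dvd t" by auto
      then have "n dvd 1" using ct by (metis coprime_common_divisor dvd_refl)
      then show False using n2 by simp
    qed
    moreover have "coprime (t mod n) n" using ct by (metis coprime_mod_left_iff gr_implies_not0 n2)
    moreover have "t mod n \<le> n" using n2 by (simp add: order_less_imp_le)
    ultimately show ?thesis by (simp add: in_totatives_iff)
  qed
  then obtain i where i: "i < totient n" "g ^ i mod n = t mod n"
    using gen unfolding bij_betw_def by (metis (no_types, lifting) imageE lessThan_iff)
  have "[(g^i)^2 = 1] (mod n)"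
  proof -
    have "[g^i = t] (mod n)" using i(2) by (simp add: cong_def)
    then have "[(g^i)^2 = t^2] (mod n)" by (rule cong_pow)
    then show ?thesis using sq by (rule cong_trans)
  qed
  then have hi: "2 * i = 0 \<or> 2 * i = totient n" using key i(1) by blast
  have "coprime (n-1) n" using n2 by (intro coprime_diff_one_left_nat) simp
  then have tn: "n - 1 \<in> totatives n" using n2 by (simp add: in_totatives_iff)
  then obtain j where j: "j < totient n" "g ^ j mod n = n - 1"
    using gen unfolding bij_betw_def by (metis (no_types, lifting) imageE lessThan_iff)
  have "[(n-1)^2 = 1] (mod n)"
  proof -
    have "[int (n-1)^2 = int 1] (mod int n)"
    proof -
      have "int (n-1)^2 = int n * (int n - 2) + 1" using n2 by (simp add: of_nat_diff power2_eq_square algebra_simps)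
      then show ?thesis by (simp add: cong_def)
    qed
    then show ?thesis by (simp only: cong_int_iff flip: of_nat_power)
  qed
  then have "[(g^j)^2 = 1] (mod n)"
  proof -
    have "(n-1) mod n = n - 1" using n2 by simp
    then have "[g^j = n-1] (mod n)" using j(2) unfolding cong_def by simp
    then have "[(g^j)^2 = (n-1)^2] (mod n)" by (rule cong_pow)
    then show ?thesis using \<open>[(n-1)^2 = 1] (mod n)\<close> by (rule cong_trans)
  qed
  then have hj: "2 * j = 0 \<or> 2 * j = totient n" using key j(1) by blast
  have "j \<noteq> 0"
  proof
    assume "j = 0"
    then have "1 mod n = n - 1" using j(2) by simp
    then show False using n2 by simp
  qed
  then have hj': "2 * j = totient n" using hj by auto
  show ?thesis
  proof (cases "i = 0")
    case True
    then show ?thesis using i(2) n2 by simp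
  next
    case False
    then have "i = j" using hi hj' by auto
    then show ?thesis using i(2) j(2) by simp
  qed
qed

lemma sqrt1_int:
  fixes M t :: int
  assumes pr: "residue_primroot (nat M) g" and ct: "coprime t M" and sq: "[t^2 = 1] (mod M)"
  shows "[t = 1] (mod M) \<or> [t = -1] (mod M)"
proof -
  have M0: "M > 0" using pr by (simp add: residue_primroot_def)
  consider "M = 1" | "M = 2" | "M > 2" using M0 by linarith
  then show ?thesis
  proof cases
    case 1 then show ?thesis by simp
  next
    case 2
    then have "odd t" using ct by (metis coprime_right_2_iff_odd)
    then have "t mod 2 = 1" by presburger
    then show ?thesis using 2 by (simp add: cong_def)
  next
    case 3
    define n where "n = nat M"
    define t' where "t' = nat (t mod M)"
    have tt: "int t' = t mod M" using M0 by (simp add: t'_def)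
    have nn: "int n = M" using M0 by (simp add: n_def)
    have n2: "n > 2" using 3 n_def by simp
    have "coprime (int t') (int n)" using ct M0 tt nn by simp
    then have c': "coprime t' n" by simp
    have "[t mod M = t] (mod M)" by (simp add: cong_def)
    then have "[(t mod M)^2 = t^2] (mod M)" by (rule cong_pow)
    then have "[(t mod M)^2 = 1] (mod M)" using sq by (rule cong_trans)
    then have "[int (t'^2) = int 1] (mod int n)" using tt nn by simp
    then have s': "[t'^2 = 1] (mod n)" by (simp only: cong_int_iff)
    from sqrt1_nat[OF _ n2 c' s'] pr n_def
    have "t' mod n = 1 \<or> t' mod n = n - 1" by simp
    then have "int t' mod int n = 1 \<or> int t' mod int n = int n - 1"
      using n2 by (metis of_nat_1 of_nat_diff of_nat_mod less_imp_le_nat one_le_numeral le_trans)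
    then have "t mod M = 1 \<or> t mod M = M - 1" using tt nn by simp
    moreover have "(-1) mod M = M - 1" using 3 by (simp add: zmod_zminus1_eq_if)
    moreover have "1 mod M = 1" using 3 by simp
    ultimately show ?thesis unfolding cong_def by auto
  qed
qed

lemma sq_cong:
  fixes M x y :: int
  assumes pr: "residue_primroot (nat M) g" and cy: "coprime y M" and sq: "[x^2 = y^2] (mod M)"
  shows "[x = y] (mod M) \<or> [x = -y] (mod M)"
proof -
  obtain y' where y': "[y * y' = 1] (mod M)" using cong_solve_coprime_int[OF cy] by blast
  have cy': "coprime y' M" using y' by (metis cong_imp_coprime cong_sym coprime_1_left coprime_mult_left_iff)
  have "[(x*y')^2 = y^2 * y'^2] (mod M)" using sq by (simp add: power_mult_distrib cong_mult)
  moreover have "[y^2 * y'^2 = 1] (mod M)" using cong_pow[OF y', of 2] by (simp add: power_mult_distrib)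
  ultimately have "[(x*y')^2 = 1] (mod M)" by (rule cong_trans)
  moreover have "coprime (x*y') M"
  proof -
    have "coprime (x^2) M" using sq cy by (metis cong_imp_coprime cong_sym coprime_power_left_iff zero_less_numeral)
    then have "coprime x M" by simp
    then show ?thesis using cy' by simp
  qed
  ultimately have "[x*y' = 1] (mod M) \<or> [x*y' = -1] (mod M)" using sqrt1_int pr by blast
  then have "[x*y'*y = 1*y] (mod M) \<or> [x*y'*y = -1*y] (mod M)"
    using cong_mult[OF _ cong_refl[of y]] by blast
  moreover have "[x*y'*y = x] (mod M)" using cong_mult[OF cong_refl[of x] y'] by (simp add: ac_simps)
  ultimately show ?thesis by (auto dest: cong_sym intro: cong_trans)
qed

theorem mainTheorem6:
  fixes a b n1 m :: int and z w :: nat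
  assumes "a > 0" and "b > 0" and "gcd a b = 1"
    and "\<exists>g. residue_primroot (nat (a^2 + b^2)) g"
    and "n1 > 0" and "m > 0"
    and "\<exists>u::int. (a^2 + b^2) * n1 - m^4
                 = u^2 + (a^2 + b^2) * (int z)^2 + (a^2 + b^2) * (int w)^2"
    and "\<And>p::int. prime p \<Longrightarrow> odd p \<Longrightarrow> p dvd (a^2 + b^2) \<Longrightarrow> gcd m p = 1"
    and "gcd m (a^2 + b^2) > 1 \<Longrightarrow> \<not> 2 dvd (a * b) \<and> gcd m (a^2 + b^2) = 2"
  shows "\<exists>x y :: int. x^2 + y^2 + (int z)^2 + (int w)^2 = n1 \<and> a * x + b * y = m^2 \<and>
           ((real_of_int (m^2) \<ge> sqrt (real_of_int (b^2 * n1)) \<and> a \<le> b) \<longrightarrow> x \<ge> 0 \<and> y \<ge> 0)"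
proof -
  note pos = assms(1,2)
  define N where "N = a^2 + b^2"
  have N0: "N > 0" using pos by (simp add: N_def add_pos_pos)
  obtain u where u: "(a^2 + b^2) * n1 - m^4 = u^2 + (a^2 + b^2) * (int z)^2 + (a^2 + b^2) * (int w)^2"
    using assms(7) by blast
  define R where "R = n1 - (int z)^2 - (int w)^2"
  have NR: "N * R = m^4 + u^2" using u by (simp add: N_def R_def algebra_simps)
  have ca: "coprime a N"
  proof -
    have "coprime a b" using assms(3) by (simp add: coprime_iff_gcd_eq_1)
    then have "coprime a (b^2)" by simp
    moreover have "gcd a (a^2+b^2) = gcd a (b^2)" using gcd_add_mult[of a a "b^2"] by (simp add: power2_eq_square)
    ultimately show ?thesis unfolding N_def coprime_iff_gcd_eq_1 by simp
  qed
  have cb: "coprime b N"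
  proof -
    have "coprime b a" using assms(3) by (simp add: coprime_iff_gcd_eq_1 gcd.commute)
    then have "coprime b (a^2)" by simp
    moreover have "gcd b (a^2+b^2) = gcd b (a^2)" using gcd_add_mult[of b b "a^2"] by (simp add: power2_eq_square add.commute)
    ultimately show ?thesis unfolding N_def coprime_iff_gcd_eq_1 by simp
  qed
  define r where "r = b * u"
  define s where "s = a * m^2"
  have rs: "[r^2 = s^2] (mod N)"
  proof -
    have "r^2 - s^2 = b^2 * (m^4 + u^2) - N * m^4"
      by (simp add: r_def s_def N_def algebra_simps power_mult_distrib flip: power_mult)
    also have "... = b^2 * (N * R) - N * m^4" using NR by simp
    also have "... = N * (b^2 * R - m^4)" by (simp add: algebra_simps)
    finally show ?thesis by (simp add: cong_iff_dvd_diff)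
  qed
  obtain g where pr: "residue_primroot (nat N) g" using assms(4) N_def by blast
  have pm: "[r = s] (mod N) \<or> [r = -s] (mod N)"
  proof (cases "gcd m N > 1")
    case False
    have "gcd m N \<noteq> 0" using N0 by simp
    then have "gcd m N = 1" using False by (smt (verit) gcd_ge_0_int)
    then have "coprime m N" by (simp add: coprime_iff_gcd_eq_1)
    then have "coprime (m^2) N" by simp
    then have "coprime s N" using ca by (simp add: s_def)
    then show ?thesis using sq_cong[OF pr _ rs] by blast
  next
    case True
    then have "gcd m (a^2+b^2) > 1" by (simp add: N_def)
    with assms(9) have ab: "odd (a*b)" and g2: "gcd m (a^2+b^2) = 2" by blast+
    have oa: "odd a" and ob: "odd b" using ab by auto
    obtain k where k: "a = 2*k+1" using oa by (metis oddE)
    obtain l where l: "b = 2*l+1" using ob by (metis oddE)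
    define M where "M = 2*(k^2+k+l^2+l) + 1"
    have NM: "N = 2 * M" by (simp add: N_def M_def k l power2_eq_square algebra_simps)
    have oM: "odd M" by (simp add: M_def)
    have M0: "M > 0" using N0 NM by simp
    have "nat N = 2 * nat M" using NM M0 by simp
    moreover have "coprime 2 (nat M)"
    proof -
      have "coprime 2 M" using oM by (simp add: coprime_left_2_iff_odd)
      then have "coprime (int 2) (int (nat M))" using M0 by simp
      then show ?thesis by (simp only: coprime_int_iff)
    qed
    ultimately have prM: "residue_primroot (nat M) g"
      using residue_primroot_modulus_mult_coprimeD(2) pr by metis
    have "gcd m M dvd gcd (gcd m N) M" using NM by simp
    then have "gcd m M dvd gcd 2 M" using g2 N_def by simp
    moreover have "gcd 2 M = 1" using oM by (metis coprime_iff_gcd_eq_1 coprime_left_2_iff_odd)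
    ultimately have "gcd m M = 1" by simp
    then have "coprime m M" by (simp add: coprime_iff_gcd_eq_1)
    then have "coprime (m^2) M" by simp
    moreover have "coprime a M" using ca NM by simp
    ultimately have "coprime s M" by (simp add: s_def)
    moreover have "[r^2 = s^2] (mod M)" using rs NM by (metis cong_dvd_modulus dvd_triv_right)
    ultimately have pmM: "[r = s] (mod M) \<or> [r = -s] (mod M)" using sq_cong[OF prM] by blast
    have "m^4 + u^2 = 2 * (M * R)" using NR NM by simp
    then have "even (m^4 + u^2)" by simp
    then have "even (m + u)" by auto
    then have e1: "even (r - s)" and e2: "even (r + s)" using oa ob
      by (auto simp: r_def s_def)
    have c2M: "coprime 2 M" using oM by (simp add: coprime_left_2_iff_odd)
    from pmM show ?thesis
    proof
      assume "[r = s] (mod M)"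
      then have "M dvd r - s" by (simp add: cong_iff_dvd_diff)
      then have "2 * M dvd r - s" using e1 c2M by (simp add: divides_mult)
      then show ?thesis using NM by (simp add: cong_iff_dvd_diff)
    next
      assume "[r = -s] (mod M)"
      then have "M dvd r + s" by (simp add: cong_iff_dvd_diff)
      then have "2 * M dvd r + s" using e2 c2M by (simp add: divides_mult)
      then show ?thesis using NM by (simp add: cong_iff_dvd_diff)
    qed
  qed
  obtain v where v: "v^2 = u^2" "N dvd a * m^2 + b * v"
  proof -
    from pm show ?thesis
    proof
      assume "[r = s] (mod N)"
      then have "N dvd s - r" by (simp add: cong_iff_dvd_diff dvd_diff_commute)
      then show ?thesis using that[of "-u"] by (simp add: r_def s_def)
    next
      assume "[r = -s] (mod N)"
      then have "N dvd r + s" by (simp add: cong_iff_dvd_diff)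
      then show ?thesis using that[of u] by (simp add: r_def s_def add.commute)
    qed
  qed
  have "N dvd a * (b * m^2 - a * v)"
  proof -
    have "a * (b * m^2 - a * v) = b * (a * m^2 + b * v) - N * v" by (simp add: N_def algebra_simps power2_eq_square)
    then show ?thesis using v(2) by simp
  qed
  then have "N dvd b * m^2 - a * v" using ca by (metis coprime_commute coprime_dvd_mult_right_iff)
  then obtain y where y: "b * m^2 - a * v = N * y" by blast
  obtain x where x: "a * m^2 + b * v = N * x" using v(2) by blast
  have "N * (a * x + b * y) = N * m^2"
  proof -
    have "N * (a * x + b * y) = a * (N * x) + b * (N * y)" by (simp add: algebra_simps)
    also have "... = N * m^2" unfolding x[symmetric] y[symmetric] by (simp add: N_def algebra_simps power2_eq_square)
    finally show ?thesis .
  qed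
  then have lin: "a * x + b * y = m^2" using N0 by simp
  have "(N * N) * (x^2 + y^2) = (N * N) * R"
  proof -
    have "(N * N) * (x^2 + y^2) = (N * x)^2 + (N * y)^2" by (simp add: algebra_simps power2_eq_square)
    also have "... = N * (m^4 + v^2)" unfolding x[symmetric] y[symmetric]
      by (simp add: N_def algebra_simps power2_eq_square eval_nat_numeral)
    also have "... = (N * N) * R" using NR v(1) by simp
    finally show ?thesis .
  qed
  then have "x^2 + y^2 = R" using N0 by simp
  then have quad: "x^2 + y^2 + (int z)^2 + (int w)^2 = n1" by (simp add: R_def)
  have nonneg: "x \<ge> 0 \<and> y \<ge> 0" if H: "real_of_int (m^2) \<ge> sqrt (real_of_int (b^2 * n1))" "a \<le> b"
  proof -
    have nn: "real_of_int (b^2 * n1) \<ge> 0" using assms(5) by simp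
    then have "real_of_int (b^2 * n1) = (sqrt (real_of_int (b^2 * n1)))^2" by simp
    also have "... \<le> (real_of_int (m^2))^2" using H(1) nn by (intro power_mono) auto
    finally have "real_of_int (b^2 * n1) \<le> real_of_int ((m^2)^2)" by simp
    then have bm: "b^2 * n1 \<le> (m^2)^2" by linarith
    have m2: "m^2 > 0" using assms(6) by simp
    have sq0: "x^2 \<ge> 0" "y^2 \<ge> 0" "(int z)^2 \<ge> 0" "(int w)^2 \<ge> 0" by simp_all
    have xle: "x^2 \<le> n1" and yle: "y^2 \<le> n1" using quad sq0 by linarith+
    have big: "t^2 > n1" if "b * t > m^2" for t
    proof -
      have "(m^2)^2 < (b * t)^2" using that m2 by (intro power_strict_mono) auto
      then have "b^2 * n1 < b^2 * t^2" using bm by (simp add: power_mult_distrib)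
      then show ?thesis using pos by simp
    qed
    have "x \<ge> 0"
    proof (rule ccontr)
      assume "\<not> x \<ge> 0"
      then have "a * x < 0" using pos by (simp add: mult_pos_neg)
      then have "b * y > m^2" using lin by linarith
      then have "y^2 > n1" by (rule big)
      then show False using yle by linarith
    qed
    moreover have "y \<ge> 0"
    proof (rule ccontr)
      assume "\<not> y \<ge> 0"
      then have "b * y < 0" using pos by (simp add: mult_pos_neg)
      then have ax: "a * x > m^2" using lin by linarith
      then have "a * x > 0" using m2 by linarith
      then have "x > 0" using pos by (simp add: zero_less_mult_iff)
      then have "b * x \<ge> a * x" using H(2) by simp
      then have "b * x > m^2" using ax by linarith
      then have "x^2 > n1" by (rule big)
      then show False using xle by linarith
    qed
    ultimately show ?thesis by simp
  qed
  show ?thesis using quad lin nonneg by blast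
qed

end
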